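(* Let $G$ be an esp-digraph. Then $\chi'_o(G)\le 7$.
   Context: An oriented $r$-arc-coloring of a digraph $G=(V,E)$ (parallel arcs allowed; the definition applies verbatim) is a map $c:E\to\{1,\dots,r\}$ such that (i) $c((u,v))\ne c((v,w))$ for every two arcs $(u,v),(v,w)\in E$, and (ii) $c((u,v))\ne c((y,z))$ for all arcs $(u,v),(v,w),(x,y),(y,z)\in E$ with $c((v,w))=c((x,y))$. The oriented chromatic index $\chi'_o(G)$ is the smallest $r$ for which such a coloring exists. Edge series-parallel (multi)digraphs (esp-digraphs) are defined recursively, each with a distinguished source and sink: (i) a digraph with two distinct vertices $u,v$ and the single arc $(u,v)$ is an esp-digraph with source $u$ and sink $v$; (ii) if $G_1,G_2$ are vertex-disjoint esp-digraphs, then the parallel composition $G_1\cup G_2$ (identify the source of $G_1$ with the source of $G_2$ and the sink of $G_1$ with the sink of $G_2$; arcs are united, possibly creating parallel arcs) is an esp-digraph with these identified source and sink, and the series composition $G_1\times G_2$ (identify the sink of $G_1$ with the source of $G_2$) is an esp-digraph with source the source of $G_1$ and sink the sink of $G_2$. *)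

theory Defs
  imports Main
begin

text \<open>A (multi)digraph is given by a vertex set V, an arc set E (arc identifiers,
  so parallel arcs are allowed) and tail/head maps (only relevant on E).\<close>

definition oriented_arc_coloring ::
  "'e set \<Rightarrow> ('e \<Rightarrow> 'v) \<Rightarrow> ('e \<Rightarrow> 'v) \<Rightarrow> ('e \<Rightarrow> nat) \<Rightarrow> nat \<Rightarrow> bool" where
  "oriented_arc_coloring E tail head c r \<longleftrightarrow>
     (\<forall>a\<in>E. c a \<in> {1..r}) \<and>
     (\<forall>a\<in>E. \<forall>b\<in>E. head a = tail b \<longrightarrow> c a \<noteq> c b) \<and>
     (\<forall>a\<in>E. \<forall>b\<in>E. \<forall>a'\<in>E. \<forall>b'\<in>E.
        head a = tail b \<longrightarrow> head a' = tail b' \<longrightarrow> c b = c a' \<longrightarrow> c a \<noteq> c b')"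

definition oriented_chromatic_index ::
  "'e set \<Rightarrow> ('e \<Rightarrow> 'v) \<Rightarrow> ('e \<Rightarrow> 'v) \<Rightarrow> nat" where
  "oriented_chromatic_index E tail head = (LEAST r. \<exists>c. oriented_arc_coloring E tail head c r)"

text \<open>Edge series-parallel multidigraphs, with the identification of vertices in the
  compositions realised by sharing vertex names (components otherwise vertex-disjoint,
  arcs disjoint). esp tail head V E s t: (V,E,tail,head) is an esp-digraph with source s, sink t.\<close>

inductive esp ::
  "('e \<Rightarrow> 'v) \<Rightarrow> ('e \<Rightarrow> 'v) \<Rightarrow> 'v set \<Rightarrow> 'e set \<Rightarrow> 'v \<Rightarrow> 'v \<Rightarrow> bool"
  for tail head where
  single: "\<lbrakk>u \<noteq> v; tail e = u; head e = v\<rbrakk> \<Longrightarrow> esp tail head {u, v} {e} u v"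
| par: "\<lbrakk>esp tail head V1 E1 s t; esp tail head V2 E2 s t; V1 \<inter> V2 = {s, t}; E1 \<inter> E2 = {}\<rbrakk>
        \<Longrightarrow> esp tail head (V1 \<union> V2) (E1 \<union> E2) s t"
| ser: "\<lbrakk>esp tail head V1 E1 s m; esp tail head V2 E2 m t; V1 \<inter> V2 = {m}; E1 \<inter> E2 = {}\<rbrakk>
        \<Longrightarrow> esp tail head (V1 \<union> V2) (E1 \<union> E2) s t"

end

theory Submission
  imports Defs
begin

definition Tr :: "nat \<Rightarrow> nat \<Rightarrow> bool" where
  "Tr i j \<longleftrightarrow> (j + 7 - i) mod 7 \<in> {1,2,4}"

definition line :: "nat \<Rightarrow> nat set" where
  "line b = {b, (b+1) mod 7, (b+3) mod 7}"

lemma lt7: "(y::nat) < 7 \<Longrightarrow> y=0 \<or> y=1 \<or> y=2 \<or> y=3 \<or> y=4 \<or> y=5 \<or> y=6"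
  by auto

lemma Tr_irr: "i < 7 \<Longrightarrow> \<not> Tr i i"
  using lt7[of i] by (auto simp: Tr_def)

lemma Tr_anti: "i < 7 \<Longrightarrow> j < 7 \<Longrightarrow> Tr i j \<Longrightarrow> \<not> Tr j i"
  using lt7[of i] lt7[of j] by (auto simp: Tr_def)

lemma line_in: "z < 7 \<Longrightarrow> w \<in> line ((z+1) mod 7) \<Longrightarrow> Tr z w"
  using lt7[of z] by (auto simp: Tr_def line_def)

lemma line_lt: "b < 7 \<Longrightarrow> w \<in> line b \<Longrightarrow> w < 7"
  by (auto simp: line_def)

lemma line_pred0: assumes "y < 7" "b < 7" "y \<in> line b" shows "\<exists>z\<in>{0,1,2,3,4,5,6}. z \<in> line b \<and> Tr z y"
  using lt7[OF assms(1)] lt7[OF assms(2)] assms(3) by (elim disjE; simp add: Tr_def line_def)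

lemma line_pred: "y < 7 \<Longrightarrow> b < 7 \<Longrightarrow> y \<in> line b \<Longrightarrow> \<exists>z<7. z \<in> line b \<and> Tr z y"
  proof -
  assume "y < 7" "b < 7" "y \<in> line b"
  then obtain z where "z\<in>{0,1,2,3,4,5,6}" "z \<in> line b \<and> Tr z y" using line_pred0 by blast
  moreover have "z < 7" using \<open>z\<in>{0,1,2,3,4,5,6}\<close> by auto
  ultimately show ?thesis by blast
qed

lemma line_succ: assumes "z < 7" "y < 7" "Tr z y" shows "y \<in> line ((z+1) mod 7)"
  using lt7[OF assms(1)] lt7[OF assms(2)] assms(3) by (elim disjE; simp add: Tr_def line_def)

lemma esp_struct:
  assumes "esp tail head V E s t"
  shows "s \<noteq> t \<and> s \<in> V \<and> t \<in> V \<and> (\<forall>e\<in>E. tail e \<in> V \<and> head e \<in> V \<and> head e \<noteq> s \<and> tail e \<noteq> t)"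
  using assms
proof (induction rule: esp.induct)
  case (single u v e)
  then show ?case by auto
next
  case (par V1 E1 s t V2 E2)
  then show ?case by auto
next
  case (ser V1 E1 s m V2 E2 t)
  then show ?case by blast
qed

definition good :: "'e set \<Rightarrow> ('e \<Rightarrow> 'v) \<Rightarrow> ('e \<Rightarrow> 'v) \<Rightarrow> ('e \<Rightarrow> nat) \<Rightarrow> bool" where
  "good E tail head c \<longleftrightarrow> (\<forall>e\<in>E. c e < 7) \<and> (\<forall>a\<in>E. \<forall>b\<in>E. head a = tail b \<longrightarrow> Tr (c a) (c b))"

lemma esp_color:
  assumes "esp tail head V E s t"
  shows "\<forall>y b. y < 7 \<longrightarrow> b < 7 \<longrightarrow> y \<in> line b \<longrightarrow> (\<exists>c. good E tail head c \<and>
     (\<forall>e\<in>E. tail e = s \<longrightarrow> c e \<in> line b) \<and> (\<forall>e\<in>E. head e = t \<longrightarrow> c e = y))"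
  using assms
proof (induction rule: esp.induct)
  case (single u v e)
  show ?case
  proof (intro allI impI)
    fix y b assume "y < (7::nat)" "b < (7::nat)" "y \<in> line b"
    then show "\<exists>c. good {e} tail head c \<and> (\<forall>e'\<in>{e}. tail e' = u \<longrightarrow> c e' \<in> line b) \<and> (\<forall>e'\<in>{e}. head e' = v \<longrightarrow> c e' = y)"
      using single by (intro exI[of _ "\<lambda>_. y"]) (auto simp: good_def)
  qed
next
  case (par V1 E1 s t V2 E2)
  have S1: "s \<noteq> t \<and> s \<in> V1 \<and> t \<in> V1 \<and> (\<forall>e\<in>E1. tail e \<in> V1 \<and> head e \<in> V1 \<and> head e \<noteq> s \<and> tail e \<noteq> t)"
    using esp_struct[OF par.hyps(1)] .
  have S2: "s \<noteq> t \<and> s \<in> V2 \<and> t \<in> V2 \<and> (\<forall>e\<in>E2. tail e \<in> V2 \<and> head e \<in> V2 \<and> head e \<noteq> s \<and> tail e \<noteq> t)"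
    using esp_struct[OF par.hyps(2)] .
  show ?case
  proof (intro allI impI)
    fix y b assume h: "y < (7::nat)" "b < (7::nat)" "y \<in> line b"
    obtain c1 where c1: "good E1 tail head c1" "\<forall>e\<in>E1. tail e = s \<longrightarrow> c1 e \<in> line b" "\<forall>e\<in>E1. head e = t \<longrightarrow> c1 e = y"
      using par.IH(1) h by blast
    obtain c2 where c2: "good E2 tail head c2" "\<forall>e\<in>E2. tail e = s \<longrightarrow> c2 e \<in> line b" "\<forall>e\<in>E2. head e = t \<longrightarrow> c2 e = y"
      using par.IH(2) h by blast
    define c where "c = (\<lambda>e. if e \<in> E1 then c1 e else c2 e)"
    have "good (E1 \<union> E2) tail head c"
      unfolding good_def
    proof (intro conjI ballI impI)
      fix e assume "e \<in> E1 \<union> E2" then show "c e < 7" using c1(1) c2(1) by (auto simp: good_def c_def)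
    next
      fix a b' assume ab: "a \<in> E1 \<union> E2" "b' \<in> E1 \<union> E2" "head a = tail b'"
      show "Tr (c a) (c b')"
      proof (cases "a \<in> E1")
        case True
        show ?thesis
        proof (cases "b' \<in> E1")
          case True
          then show ?thesis using \<open>a \<in> E1\<close> ab c1(1) by (auto simp: good_def c_def)
        next
          case False
          then have "b' \<in> E2" using ab by auto
          then have "head a \<in> V1 \<inter> V2" using True S1 S2 ab by auto
          then show ?thesis using par.hyps(3) True \<open>b' \<in> E2\<close> S1 S2 ab by auto
        qed
      next
        case False
        then have "a \<in> E2" using ab by auto
        show ?thesis
        proof (cases "b' \<in> E1")
          case True
          then have "head a \<in> V1 \<inter> V2" using \<open>a \<in> E2\<close> S1 S2 ab by auto
          then show ?thesis using par.hyps(3) True \<open>a \<in> E2\<close> S1 S2 ab by auto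
        next
          case False
          then show ?thesis using \<open>a \<in> E2\<close> \<open>a \<notin> E1\<close> ab c2(1) by (auto simp: good_def c_def)
        qed
      qed
    qed
    then show "\<exists>c. good (E1 \<union> E2) tail head c \<and> (\<forall>e\<in>E1 \<union> E2. tail e = s \<longrightarrow> c e \<in> line b) \<and> (\<forall>e\<in>E1 \<union> E2. head e = t \<longrightarrow> c e = y)"
      using c1 c2 by (intro exI[of _ c]) (auto simp: c_def)
  qed
next
  case (ser V1 E1 s m V2 E2 t)
  have S1: "s \<noteq> m \<and> s \<in> V1 \<and> m \<in> V1 \<and> (\<forall>e\<in>E1. tail e \<in> V1 \<and> head e \<in> V1 \<and> head e \<noteq> s \<and> tail e \<noteq> m)"
    using esp_struct[OF ser.hyps(1)] .
  have S2: "m \<noteq> t \<and> m \<in> V2 \<and> t \<in> V2 \<and> (\<forall>e\<in>E2. tail e \<in> V2 \<and> head e \<in> V2 \<and> head e \<noteq> m \<and> tail e \<noteq> t)"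
    using esp_struct[OF ser.hyps(2)] .
  show ?case
  proof (intro allI impI)
    fix y b assume h: "y < (7::nat)" "b < (7::nat)" "y \<in> line b"
    obtain z where z: "z < 7" "z \<in> line b" "Tr z y" using line_pred[OF h] by blast
    have zz: "(z+1) mod 7 < 7" "y \<in> line ((z+1) mod 7)" using line_succ[OF z(1) h(1) z(3)] by auto
    obtain c1 where c1: "good E1 tail head c1" "\<forall>e\<in>E1. tail e = s \<longrightarrow> c1 e \<in> line b" "\<forall>e\<in>E1. head e = m \<longrightarrow> c1 e = z"
      using ser.IH(1) h z by blast
    obtain c2 where c2: "good E2 tail head c2" "\<forall>e\<in>E2. tail e = m \<longrightarrow> c2 e \<in> line ((z+1) mod 7)" "\<forall>e\<in>E2. head e = t \<longrightarrow> c2 e = y"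
      using ser.IH(2) h zz by blast
    define c where "c = (\<lambda>e. if e \<in> E1 then c1 e else c2 e)"
    have "good (E1 \<union> E2) tail head c"
      unfolding good_def
    proof (intro conjI ballI impI)
      fix e assume "e \<in> E1 \<union> E2" then show "c e < 7" using c1(1) c2(1) by (auto simp: good_def c_def)
    next
      fix a b' assume ab: "a \<in> E1 \<union> E2" "b' \<in> E1 \<union> E2" "head a = tail b'"
      show "Tr (c a) (c b')"
      proof (cases "a \<in> E1")
        case True
        show ?thesis
        proof (cases "b' \<in> E1")
          case True
          then show ?thesis using \<open>a \<in> E1\<close> ab c1(1) by (auto simp: good_def c_def)
        next
          case False
          then have "b' \<in> E2" using ab by auto
          then have "head a \<in> V1 \<inter> V2" using True S1 S2 ab by auto
          then have "head a = m" using ser.hyps(3) by auto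
          then have "c a = z" "c b' \<in> line ((z+1) mod 7)"
            using True \<open>b' \<in> E2\<close> False c1 c2 ab by (auto simp: c_def)
          then show ?thesis using line_in[OF z(1)] by auto
        qed
      next
        case False
        then have "a \<in> E2" using ab by auto
        show ?thesis
        proof (cases "b' \<in> E1")
          case True
          then have "head a \<in> V1 \<inter> V2" using \<open>a \<in> E2\<close> S1 S2 ab by auto
          then show ?thesis using ser.hyps(3) True \<open>a \<in> E2\<close> S1 S2 ab by auto
        next
          case False
          then show ?thesis using \<open>a \<in> E2\<close> \<open>a \<notin> E1\<close> ab c2(1) by (auto simp: good_def c_def)
        qed
      qed
    qed
    moreover have "\<forall>e\<in>E1 \<union> E2. tail e = s \<longrightarrow> c e \<in> line b"
    proof (intro ballI impI)
      fix e assume "e \<in> E1 \<union> E2" "tail e = s"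
      moreover have "e \<notin> E2 \<or> e \<in> E1"
      proof (rule ccontr)
        assume "\<not> (e \<notin> E2 \<or> e \<in> E1)"
        then have "s \<in> V1 \<inter> V2" using S1 S2 \<open>tail e = s\<close> by auto
        then show False using ser.hyps(3) S1 by auto
      qed
      ultimately show "c e \<in> line b" using c1 by (auto simp: c_def)
    qed
    moreover have "\<forall>e\<in>E1 \<union> E2. head e = t \<longrightarrow> c e = y"
    proof (intro ballI impI)
      fix e assume "e \<in> E1 \<union> E2" "head e = t"
      moreover have "e \<notin> E1"
      proof
        assume "e \<in> E1"
        then have "t \<in> V1 \<inter> V2" using S1 S2 \<open>head e = t\<close> by auto
        then show False using ser.hyps(3) S2 by auto
      qed
      ultimately show "c e = y" using c2 by (auto simp: c_def)
    qed
    ultimately show "\<exists>c. good (E1 \<union> E2) tail head c \<and> (\<forall>e\<in>E1 \<union> E2. tail e = s \<longrightarrow> c e \<in> line b) \<and> (\<forall>e\<in>E1 \<union> E2. head e = t \<longrightarrow> c e = y)"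
      by blast
  qed
qed

theorem mainTheorem6:
  fixes V :: "'v set" and E :: "'e set" and tail head :: "'e \<Rightarrow> 'v" and s t :: 'v
  assumes "esp tail head V E s t"
  shows "oriented_chromatic_index E tail head \<le> 7 \<and> (\<exists>c. oriented_arc_coloring E tail head c 7)"
proof -
  have "(0::nat) \<in> line 0" by (simp add: line_def)
  then obtain c where c: "good E tail head c" using esp_color[OF assms] by fastforce
  have col: "oriented_arc_coloring E tail head (\<lambda>e. c e + 1) 7"
    unfolding oriented_arc_coloring_def
  proof (intro conjI ballI impI)
    fix a assume "a \<in> E" then show "c a + 1 \<in> {1..7}" using c by (auto simp: good_def)
  next
    fix a b assume "a \<in> E" "b \<in> E" "head a = tail b"
    then show "c a + 1 \<noteq> c b + 1" using c Tr_irr[of "c a"] by (auto simp: good_def)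
  next
    fix a b a' b' assume h: "a \<in> E" "b \<in> E" "a' \<in> E" "b' \<in> E" "head a = tail b" "head a' = tail b'"
      "c b + 1 = c a' + 1"
    show "c a + 1 \<noteq> c b' + 1"
    proof
      assume "c a + 1 = c b' + 1"
      then have e: "c a = c b'" by simp
      have "Tr (c a') (c b')" using h c by (auto simp: good_def)
      then have "Tr (c b) (c a)" using e h(7) by simp
      moreover have "Tr (c a) (c b)" using h(1,2,5) c unfolding good_def by blast
      ultimately have "Tr (c a) (c b)" "Tr (c b) (c a)" by auto
      then show False using Tr_anti h c by (auto simp: good_def)
    qed
  qed
  then have "oriented_chromatic_index E tail head \<le> 7"
    unfolding oriented_chromatic_index_def by (intro Least_le) blast
  then show ?thesis using col by blast
qed

end
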